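(* Let $G$ be a connected graph on $n\geq 3$ vertices with $q(G)=2$ and minimum degree $\delta(G)\geq 3$, and let $v\in V(G)$ have eccentricity $\epsilon(v)$. Suppose every vertex of $N_i(v)$ for $i=2,3,\ldots,\epsilon(v)-1$ has exactly two predecessors, and each $N_i(v)$ for $i=1,2,\ldots,\epsilon(v)-1$ is an independent set. Then $d_0\le d_1\le\cdots\le d_{\epsilon(v)-1}$, where $d_i=|N_i(v)|$.
   Context: For a graph $G$ on $n$ vertices, $\mathcal{S}(G)$ is the set of real symmetric $n\times n$ matrices $A=[a_{ij}]$ with $a_{ij}\neq0$ for $i\ne j$ iff $\{i,j\}\in E(G)$ (diagonal unrestricted); $q(G)$ is the minimum number of distinct eigenvalues of a matrix in $\mathcal{S}(G)$. For $v\in V(G)$, $N_i(v)$ is the set of vertices at distance exactly $i$ from $v$ (so $N_0(v)=\{v\}$), and the eccentricity $\epsilon(v)$ is the maximum distance from $v$ to a vertex of $G$. If $u\in N_{i-1}(v)$ and $w\in N_i(v)$ are adjacent, $u$ is a predecessor of $w$ and $w$ a successor of $u$. *)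

theory Defs
  imports "HOL-Analysis.Analysis"
begin

definition simple_graph :: "('n::finite \<Rightarrow> 'n \<Rightarrow> bool) \<Rightarrow> bool" where
  "simple_graph E \<longleftrightarrow> (\<forall>u w. E u w \<longrightarrow> E w u) \<and> (\<forall>u. \<not> E u u)"

definition connected_graph :: "('n::finite \<Rightarrow> 'n \<Rightarrow> bool) \<Rightarrow> bool" where
  "connected_graph E \<longleftrightarrow> (\<forall>u w. E\<^sup>*\<^sup>* u w)"

definition degree :: "('n::finite \<Rightarrow> 'n \<Rightarrow> bool) \<Rightarrow> 'n \<Rightarrow> nat" where
  "degree E u = card {w. E u w}"

definition min_degree :: "('n::finite \<Rightarrow> 'n \<Rightarrow> bool) \<Rightarrow> nat" where
  "min_degree E = Min (range (degree E))"

definition gdist :: "('n \<Rightarrow> 'n \<Rightarrow> bool) \<Rightarrow> 'n \<Rightarrow> 'n \<Rightarrow> nat" where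
  "gdist E u w = (LEAST k. (E ^^ k) u w)"

definition dist_set :: "('n \<Rightarrow> 'n \<Rightarrow> bool) \<Rightarrow> 'n \<Rightarrow> nat \<Rightarrow> 'n set" where
  "dist_set E v i = {w. gdist E v w = i}"

definition eccentricity :: "('n::finite \<Rightarrow> 'n \<Rightarrow> bool) \<Rightarrow> 'n \<Rightarrow> nat" where
  "eccentricity E v = Max (range (gdist E v))"

definition predecessors :: "('n \<Rightarrow> 'n \<Rightarrow> bool) \<Rightarrow> 'n \<Rightarrow> 'n \<Rightarrow> 'n set" where
  "predecessors E v w = {u \<in> dist_set E v (gdist E v w - 1). E u w}"

definition independent_set :: "('n \<Rightarrow> 'n \<Rightarrow> bool) \<Rightarrow> 'n set \<Rightarrow> bool" where
  "independent_set E S \<longleftrightarrow> (\<forall>x\<in>S. \<forall>y\<in>S. \<not> E x y)"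

definition SG :: "('n::finite \<Rightarrow> 'n \<Rightarrow> bool) \<Rightarrow> (real^'n^'n) set" where
  "SG E = {A. transpose A = A \<and> (\<forall>i j. i \<noteq> j \<longrightarrow> (A $ i $ j \<noteq> 0 \<longleftrightarrow> E i j))}"

definition eigenvalues :: "real^'n^'n \<Rightarrow> real set" where
  "eigenvalues A = {c. \<exists>x. x \<noteq> 0 \<and> A *v x = c *\<^sub>R x}"

definition qG :: "('n::finite \<Rightarrow> 'n \<Rightarrow> bool) \<Rightarrow> nat" where
  "qG E = (LEAST k. \<exists>A \<in> SG E. card (eigenvalues A) = k)"

end

theory Submission imports Defs begin

lemma sym_dot:
  fixes A :: "real^'n^'n"
  assumes "transpose A = A"
  shows "(A *v x) \<bullet> y = x \<bullet> (A *v y)"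
proof -
  have "A *v x = x v* A" using transpose_matrix_vector[of A x] assms by simp
  thus ?thesis by (simp add: dot_lmul_matrix)
qed

lemma eig_in_subspace:
  fixes A :: "real^'n^'n"
  assumes sym: "transpose A = A" and sub: "subspace V" and inv: "\<forall>x\<in>V. A *v x \<in> V"
    and ne: "x1 \<in> V" "x1 \<noteq> 0"
  shows "\<exists>x\<in>V. x \<noteq> 0 \<and> (\<exists>c. A *v x = c *\<^sub>R x)"
proof -
  define S where "S = V \<inter> sphere 0 1"
  define f where "f = (\<lambda>x::real^'n. x \<bullet> (A *v x))"
  have cS: "compact S" unfolding S_def
    using closed_subspace[OF sub] by (simp add: closed_Int_compact)
  have "x1 /\<^sub>R norm x1 \<in> S" unfolding S_def using ne sub
    by (simp add: subspace_scale)
  hence neS: "S \<noteq> {}" by blast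
  have cf: "continuous_on S f" unfolding f_def
    by (intro continuous_intros linear_continuous_on) (auto intro: linear_linear)
  obtain x0 where x0S: "x0 \<in> S" and mx: "\<forall>y\<in>S. f y \<le> f x0"
    using continuous_attains_sup[OF cS neS cf] by blast
  define M where "M = f x0"
  have x0V: "x0 \<in> V" and nx0: "norm x0 = 1" using x0S unfolding S_def by auto
  have x0x0: "x0 \<bullet> x0 = 1" using nx0 by (simp add: dot_square_norm)
  have hom: "f y \<le> M * (y \<bullet> y)" if yV: "y \<in> V" for y
  proof (cases "y = 0")
    case True thus ?thesis by (simp add: f_def)
  next
    case False
    let ?y = "y /\<^sub>R norm y"
    have "?y \<in> S" unfolding S_def using yV False sub by (simp add: subspace_scale)
    hence "f ?y \<le> M" using mx M_def by blast
    moreover have "f ?y = f y / (norm y)^2" unfolding f_def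
      by (simp add: power2_eq_square matrix_vector_mult_scaleR field_simps)
    moreover have "y \<bullet> y = (norm y)^2" by (simp add: dot_square_norm)
    moreover have "(norm y)^2 > 0" using False by simp
    ultimately show ?thesis by (simp add: field_simps)
  qed
  define c where "c = (A *v x0) \<bullet> x0"
  define w where "w = A *v x0 - c *\<^sub>R x0"
  have wV: "w \<in> V" unfolding w_def using inv x0V sub
    by (simp add: subspace_diff subspace_scale)
  have wx0: "w \<bullet> x0 = 0" unfolding w_def c_def using x0x0 by (simp add: inner_diff_left)
  define b where "b = (A *v x0) \<bullet> w"
  have ineq: "2 * t * b + t^2 * f w \<le> M * t^2 * (w \<bullet> w)" for t :: real
  proof -
    let ?y = "x0 + t *\<^sub>R w"
    have yV: "?y \<in> V" using x0V wV sub by (simp add: subspace_add subspace_scale)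
    have fy: "f ?y = M + 2 * t * b + t^2 * f w"
      unfolding f_def M_def b_def
      using sym_dot[OF sym, of w x0]
      by (simp add: algebra_simps inner_add_left inner_add_right matrix_vector_mult_scaleR power2_eq_square inner_commute)
    have yy: "?y \<bullet> ?y = 1 + t^2 * (w \<bullet> w)"
      using x0x0 wx0 by (simp add: algebra_simps inner_add_left inner_add_right power2_eq_square inner_commute)
    have "f ?y \<le> M * (?y \<bullet> ?y)" by (rule hom[OF yV])
    hence "f ?y \<le> M * (1 + t^2 * (w \<bullet> w))" by (simp only: yy)
    thus ?thesis unfolding fy by (simp add: algebra_simps)
  qed
  define C where "C = M * (w \<bullet> w) - f w"
  have "b = 0"
  proof -
    define t where "t = b / (\<bar>C\<bar> + 1)"
    have "2 * t * b \<le> t^2 * C" using ineq[of t] unfolding C_def by (simp add: algebra_simps)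
    define D where "D = \<bar>C\<bar> + 1"
    have Dp: "D > 0" unfolding D_def by simp
    have e1: "2 * t * b * D^2 = 2 * b^2 * D" unfolding t_def D_def[symmetric] using Dp
      by (simp add: field_simps power2_eq_square)
    have e2: "t^2 * C * D^2 = b^2 * C" unfolding t_def D_def[symmetric] using Dp
      by (simp add: field_simps power2_eq_square)
    have "2 * t * b * D^2 \<le> t^2 * C * D^2"
      using \<open>2 * t * b \<le> t^2 * C\<close> by (simp add: mult_right_mono)
    hence "2 * b^2 * D \<le> b^2 * C" by (simp only: e1 e2)
    hence "2 * b^2 * (\<bar>C\<bar> + 1) \<le> b^2 * C" by (simp only: D_def)
    moreover have "b^2 * C \<le> b^2 * \<bar>C\<bar>" by (simp add: mult_left_mono)
    ultimately have "b^2 * (\<bar>C\<bar> + 2) \<le> 0" by (simp add: algebra_simps)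
    moreover have "\<bar>C\<bar> + 2 > 0" by simp
    ultimately have "b^2 \<le> 0" by (simp add: mult_le_0_iff)
    thus ?thesis by simp
  qed
  have "w \<bullet> w = b - c * (x0 \<bullet> w)" unfolding b_def
    by (simp add: w_def inner_diff_left)
  hence "w \<bullet> w = 0" using \<open>b = 0\<close> wx0 by (simp add: inner_commute)
  hence "w = 0" by simp
  hence "A *v x0 = c *\<^sub>R x0" unfolding w_def by simp
  moreover have "x0 \<noteq> 0" using nx0 by auto
  ultimately show ?thesis using x0V by blast
qed

lemma quad_zero:
  fixes A :: "real^'n^'n"
  assumes sym: "transpose A = A" and ev: "eigenvalues A \<subseteq> {l, m}"
  shows "A *v (A *v x) - (l+m) *\<^sub>R (A *v x) + (l*m) *\<^sub>R x = 0"
proof (rule ccontr)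
  define B :: "real^'n^'n" where "B = A ** A - (l+m) *\<^sub>R A + (l*m) *\<^sub>R mat 1"
  have Bv: "B *v y = A *v (A *v y) - (l+m) *\<^sub>R (A *v y) + (l*m) *\<^sub>R y" for y
    unfolding B_def
    by (simp add: matrix_vector_mult_add_rdistrib matrix_vector_mult_diff_rdistrib
        matrix_vector_mul_assoc scaleR_matrix_vector_assoc[symmetric])
  have Bsym: "(B *v y) \<bullet> z = y \<bullet> (B *v z)" for y z
    unfolding Bv using sym_dot[OF sym] 
    by (simp add: inner_add_left inner_add_right inner_diff_left inner_diff_right)
  have comm: "A *v (B *v y) = B *v (A *v y)" for y
    unfolding Bv by (simp add: matrix_vector_right_distrib matrix_vector_mult_diff_distrib matrix_vector_mult_scaleR)
  assume "A *v (A *v x) - (l+m) *\<^sub>R (A *v x) + (l*m) *\<^sub>R x \<noteq> 0"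
  hence nz: "B *v x \<noteq> 0" by (simp add: Bv)
  define V where "V = range (\<lambda>y. B *v y)"
  have sub: "subspace V" unfolding V_def
    by (metis linear_subspace_image matrix_vector_mul_linear subspace_UNIV)
  have inv: "\<forall>z\<in>V. A *v z \<in> V" unfolding V_def using comm by auto
  obtain z c where zV: "z \<in> V" and z0: "z \<noteq> 0" and Az: "A *v z = c *\<^sub>R z"
    using eig_in_subspace[OF sym sub inv, of "B *v x"] nz unfolding V_def by blast
  have "c \<in> eigenvalues A" unfolding eigenvalues_def using z0 Az by blast
  hence "c = l \<or> c = m" using ev by blast
  have "B *v z = (c*c - (l+m)*c + l*m) *\<^sub>R z"
    unfolding Bv Az using Az by (simp add: matrix_vector_mult_scaleR algebra_simps)
  also have "c*c - (l+m)*c + l*m = 0" using \<open>c = l \<or> c = m\<close> by (auto simp: algebra_simps)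
  finally have Bz: "B *v z = 0" by simp
  obtain y where zy: "z = B *v y" using zV unfolding V_def by blast
  have "z \<bullet> z = y \<bullet> (B *v z)" using Bsym zy by simp
  hence "z \<bullet> z = 0" using Bz by simp
  thus False using z0 by simp
qed

lemma quad_entry:
  fixes A :: "real^'n^'n"
  assumes sym: "transpose A = A" and ev: "eigenvalues A \<subseteq> {l, m}"
  shows "(\<Sum>k\<in>UNIV. A$i$k * A$k$j) - (l+m) * A$i$j + (l*m) * (if i = j then 1 else 0) = 0"
proof -
  have "(A *v (A *v axis j 1) - (l+m) *\<^sub>R (A *v axis j 1) + (l*m) *\<^sub>R axis j 1) $ i = 0"
    using quad_zero[OF sym ev] by simp
  moreover have "(A *v axis j 1) $ k = A$k$j" for k
    by (simp add: matrix_vector_mult_def axis_def if_distrib cong: if_cong)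
  ultimately show ?thesis
    by (simp add: matrix_vector_mult_def axis_def)
qed

lemma exists_qG_matrix:
  fixes E :: "'n::finite \<Rightarrow> 'n \<Rightarrow> bool"
  assumes sg: "simple_graph E"
  shows "\<exists>A\<in>SG E. card (eigenvalues A) = qG E"
proof -
  define Adj :: "real^'n^'n" where "Adj = (\<chi> i j. if E i j then 1 else 0)"
  have "Adj \<in> SG E" unfolding SG_def Adj_def using sg unfolding simple_graph_def
    by (auto simp: vec_eq_iff transpose_def)
  hence "\<exists>k. \<exists>A\<in>SG E. card (eigenvalues A) = k" by blast
  thus ?thesis unfolding qG_def by (rule LeastI_ex)
qed

lemma one_common_nbr_false:
  fixes E :: "'n::finite \<Rightarrow> 'n \<Rightarrow> bool"
  assumes sg: "simple_graph E" and q: "qG E = 2"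
    and xy: "x \<noteq> y" "\<not> E x y" and cn: "{k. E x k \<and> E k y} = {w}"
  shows False
proof -
  obtain A where A: "A \<in> SG E" and c2: "card (eigenvalues A) = 2"
    using exists_qG_matrix[OF sg] q by auto
  obtain l m where lm: "eigenvalues A = {l, m}" using c2 by (auto simp: card_2_iff)
  have sym: "transpose A = A" and pat: "\<And>i j. i \<noteq> j \<Longrightarrow> (A$i$j \<noteq> 0 \<longleftrightarrow> E i j)"
    using A unfolding SG_def by auto
  have Axy: "A$x$y = 0" using pat[OF xy(1)] xy(2) by simp
  have irr: "\<And>u. \<not> E u u" using sg unfolding simple_graph_def by auto
  have Exw: "E x w" and Ewy: "E w y" using cn by auto
  have xw: "x \<noteq> w" using Exw irr by auto
  have wy: "w \<noteq> y" using Ewy irr by auto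
  have "(\<Sum>k\<in>UNIV. A$x$k * A$k$y) - (l+m) * A$x$y + (l*m) * (if x = y then 1 else 0) = 0"
    using quad_entry[OF sym, of l m x y] lm by simp
  hence s0: "(\<Sum>k\<in>UNIV. A$x$k * A$k$y) = 0" using Axy xy by simp
  have z: "A$x$k * A$k$y = 0" if "k \<in> UNIV - {w}" for k
  proof (cases "k = x \<or> k = y")
    case True thus ?thesis using Axy by auto
  next
    case False
    hence "\<not> (E x k \<and> E k y)" using that cn by auto
    thus ?thesis using pat[of x k] pat[of k y] False by auto
  qed
  have "(\<Sum>k\<in>UNIV. A$x$k * A$k$y) = A$x$w * A$w$y + (\<Sum>k\<in>UNIV - {w}. A$x$k * A$k$y)"
    by (simp add: sum.remove)
  also have "(\<Sum>k\<in>UNIV - {w}. A$x$k * A$k$y) = 0" using z by (rule sum.neutral[rule_format])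
  finally have "A$x$w * A$w$y = 0" using s0 by simp
  moreover have "A$x$w \<noteq> 0" using pat[OF xw] Exw by simp
  moreover have "A$w$y \<noteq> 0" using pat[OF wy] Ewy by simp
  ultimately show False by simp
qed


lemma gd_reach:
  assumes "connected_graph E"
  shows "(E ^^ gdist E u w) u w"
proof -
  have "E\<^sup>*\<^sup>* u w" using assms unfolding connected_graph_def by blast
  then obtain k where "(E ^^ k) u w" by (auto simp: rtranclp_power)
  thus ?thesis unfolding gdist_def by (rule LeastI)
qed

lemma gd_le: "(E ^^ k) u w \<Longrightarrow> gdist E u w \<le> k"
  unfolding gdist_def by (rule Least_le)

lemma gd_edge:
  assumes "connected_graph E" "E x y"
  shows "gdist E v y \<le> gdist E v x + 1"
proof -
  have "(E ^^ Suc (gdist E v x)) v y"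
    using gd_reach[OF assms(1), of v x] assms(2) by (rule relpowp_Suc_I)
  thus ?thesis using gd_le[where E=E and k="Suc (gdist E v x)" and u=v and w=y] by simp
qed

lemma gd_adj:
  assumes "simple_graph E" "connected_graph E" "E x y"
  shows "gdist E v y \<le> gdist E v x + 1" "gdist E v x \<le> gdist E v y + 1"
  using gd_edge[OF assms(2,3)] gd_edge[OF assms(2), of y x] assms(1,3)
  unfolding simple_graph_def by auto

lemma gd_pred:
  assumes "simple_graph E" "connected_graph E" "gdist E v w = Suc j"
  shows "\<exists>u. E u w \<and> gdist E v u = j"
proof -
  have "(E ^^ Suc j) v w" using gd_reach[OF assms(2), of v w] assms(3) by simp
  then obtain u where u: "(E ^^ j) v u" "E u w" by (rule relpowp_Suc_E)
  have "gdist E v u \<le> j" using gd_le[OF u(1)] .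
  moreover have "gdist E v w \<le> gdist E v u + 1" using gd_edge[OF assms(2) u(2)] .
  ultimately show ?thesis using u(2) assms(3) by (intro exI[of _ u]) auto
qed

lemma gd_zero:
  assumes "connected_graph E"
  shows "gdist E v w = 0 \<longleftrightarrow> w = v"
proof
  assume "gdist E v w = 0"
  thus "w = v" using gd_reach[OF assms, of v w] by simp
next
  assume "w = v"
  hence "(E ^^ 0) v w" by simp
  thus "gdist E v w = 0" using gd_le[where E=E and k=0 and u=v and w=w] by simp
qed

lemma deg3:
  fixes E :: "'n::finite \<Rightarrow> 'n \<Rightarrow> bool"
  assumes "min_degree E \<ge> 3"
  shows "card {w. E u w} \<ge> 3"
proof -
  have "min_degree E \<le> degree E u" unfolding min_degree_def by (rule Min_le) auto
  thus ?thesis using assms unfolding degree_def by simp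
qed

lemma card_filter_sum:
  assumes "finite B"
  shows "card {w\<in>B. P w} = (\<Sum>w\<in>B. if P w then 1 else 0)"
proof -
  have "card {w\<in>B. P w} = (\<Sum>w\<in>{w\<in>B. P w}. 1)" by (rule card_eq_sum)
  also have "\<dots> = (\<Sum>w\<in>B. if P w then 1 else 0)" by (rule sum.inter_filter[OF assms])
  finally show ?thesis .
qed


lemma nbr_cases:
  assumes sg: "simple_graph E" and cg: "connected_graph E" and e: "E x y"
  shows "gdist E v y = gdist E v x + 1 \<or> gdist E v y = gdist E v x \<or> gdist E v y + 1 = gdist E v x"
  using gd_adj[OF sg cg e, of v] by linarith

lemma succ2:
  fixes E :: "'n::finite \<Rightarrow> 'n \<Rightarrow> bool" and v :: 'n
  assumes sg: "simple_graph E" and cg: "connected_graph E" and q: "qG E = 2"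
    and md: "min_degree E \<ge> 3"
    and pr: "\<forall>i. 2 \<le> i \<and> i \<le> eccentricity E v - 1 \<longrightarrow>
           (\<forall>w \<in> dist_set E v i. card (predecessors E v w) = 2)"
    and ind: "\<forall>i. 1 \<le> i \<and> i \<le> eccentricity E v - 1 \<longrightarrow> independent_set E (dist_set E v i)"
    and i1: "1 \<le> i" and ie: "i + 1 \<le> eccentricity E v - 1"
    and u: "u \<in> dist_set E v i"
  shows "card {w \<in> dist_set E v (i+1). E u w} \<ge> 2"
proof (rule ccontr)
  let ?S = "{w \<in> dist_set E v (i+1). E u w}"
  assume "\<not> card ?S \<ge> 2"
  hence cS: "card ?S \<le> 1" by simp
  have symE: "\<And>a b. E a b \<Longrightarrow> E b a" using sg unfolding simple_graph_def by blast
  have gu: "gdist E v u = i" using u unfolding dist_set_def by simp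
  have indi: "independent_set E (dist_set E v i)" using ind i1 ie by simp
  have indi1: "independent_set E (dist_set E v (i+1))" using ind i1 ie by simp
  have sub: "{w. E u w} \<subseteq> predecessors E v u \<union> ?S"
  proof
    fix w assume "w \<in> {w. E u w}"
    hence ew: "E u w" by simp
    consider "gdist E v w = i + 1" | "gdist E v w = i" | "gdist E v w + 1 = i"
      using nbr_cases[OF sg cg ew, of v] gu by auto
    thus "w \<in> predecessors E v u \<union> ?S"
    proof cases
      case 1 thus ?thesis using ew unfolding dist_set_def by simp
    next
      case 2 thus ?thesis using indi u ew unfolding independent_set_def dist_set_def by auto
    next
      case 3 thus ?thesis using symE[OF ew] gu unfolding predecessors_def dist_set_def by auto
    qed
  qed
  have cp: "card (predecessors E v u) \<le> 2"
  proof (cases "i \<ge> 2")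
    case True thus ?thesis using pr ie u by auto
  next
    case False
    hence "i = 1" using i1 by simp
    hence "predecessors E v u \<subseteq> {v}" unfolding predecessors_def dist_set_def
      using gu gd_zero[OF cg, of v] by auto
    hence "card (predecessors E v u) \<le> card {v}" by (intro card_mono) auto
    thus ?thesis by simp
  qed
  have "3 \<le> card {w. E u w}" using deg3[OF md] .
  also have "\<dots> \<le> card (predecessors E v u \<union> ?S)" using sub by (intro card_mono) auto
  also have "\<dots> \<le> card (predecessors E v u) + card ?S" by (rule card_Un_le)
  finally have "card ?S \<ge> 1" using cp by simp
  hence "card ?S = 1" using cS by simp
  then obtain w where Sw: "?S = {w}" by (auto simp: card_Suc_eq)
  hence euw: "E u w" and gw: "gdist E v w = i + 1" unfolding dist_set_def by auto
  have w: "w \<in> dist_set E v (i+1)" using gw unfolding dist_set_def by simp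
  have cpw: "card (predecessors E v w) = 2"
    using pr[rule_format, of "i+1" w] ie i1 w by simp
  let ?T = "{z. E w z \<and> gdist E v z = i + 2}"
  have subw: "{z. E w z} \<subseteq> predecessors E v w \<union> ?T"
  proof
    fix z assume "z \<in> {z. E w z}"
    hence ez: "E w z" by simp
    consider "gdist E v z = i + 2" | "gdist E v z = i + 1" | "gdist E v z = i"
      using nbr_cases[OF sg cg ez, of v] gw by auto
    thus "z \<in> predecessors E v w \<union> ?T"
    proof cases
      case 1 thus ?thesis using ez by simp
    next
      case 2 thus ?thesis using indi1 w ez unfolding independent_set_def dist_set_def by auto
    next
      case 3 thus ?thesis using symE[OF ez] gw unfolding predecessors_def dist_set_def by auto
    qed
  qed
  have "3 \<le> card {z. E w z}" using deg3[OF md] .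
  also have "\<dots> \<le> card (predecessors E v w \<union> ?T)" using subw by (intro card_mono) auto
  also have "\<dots> \<le> card (predecessors E v w) + card ?T" by (rule card_Un_le)
  finally have "3 \<le> card (predecessors E v w) + card ?T" .
  hence "card ?T \<noteq> 0" using cpw by linarith
  hence "?T \<noteq> {}" by (metis card.empty)
  then obtain z where ewz: "E w z" and gz: "gdist E v z = i + 2" by blast
  have uz: "u \<noteq> z" using gu gz by auto
  have nuz: "\<not> E u z" using gd_adj(1)[OF sg cg, of u z v] gu gz by auto
  have cn: "{k. E u k \<and> E k z} = {w}"
  proof
    show "{w} \<subseteq> {k. E u k \<and> E k z}" using euw ewz by simp
  next
    show "{k. E u k \<and> E k z} \<subseteq> {w}"
    proof
      fix k assume "k \<in> {k. E u k \<and> E k z}"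
      hence k: "E u k" "E k z" by auto
      have "gdist E v k \<le> i + 1" using gd_adj(1)[OF sg cg k(1), of v] gu by simp
      moreover have "gdist E v z \<le> gdist E v k + 1" using gd_adj(1)[OF sg cg k(2), of v] .
      ultimately have "gdist E v k = i + 1" using gz by simp
      hence "k \<in> ?S" using k unfolding dist_set_def by simp
      thus "k \<in> {w}" using Sw by (simp only:)
    qed
  qed
  show False by (rule one_common_nbr_false[OF sg q uz nuz cn])
qed

theorem mainTheorem5:
  fixes E :: "'n::finite \<Rightarrow> 'n \<Rightarrow> bool" and v :: 'n
  assumes "simple_graph E"
    and "connected_graph E"
    and "CARD('n) \<ge> 3"
    and "qG E = 2"
    and "min_degree E \<ge> 3"
    and "\<forall>i. 2 \<le> i \<and> i \<le> eccentricity E v - 1 \<longrightarrow>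
           (\<forall>w \<in> dist_set E v i. card (predecessors E v w) = 2)"
    and "\<forall>i. 1 \<le> i \<and> i \<le> eccentricity E v - 1 \<longrightarrow> independent_set E (dist_set E v i)"
  shows "\<forall>i. i + 1 \<le> eccentricity E v - 1 \<longrightarrow>
           card (dist_set E v i) \<le> card (dist_set E v (i + 1))"
proof (intro allI impI)
  note sg = assms(1) and cg = assms(2) and q = assms(4) and md = assms(5)
    and pr = assms(6) and ind = assms(7)
  fix i assume ie: "i + 1 \<le> eccentricity E v - 1"
  show "card (dist_set E v i) \<le> card (dist_set E v (i + 1))"
  proof (cases "i = 0")
    case True
    have D0: "dist_set E v 0 = {v}" unfolding dist_set_def using gd_zero[OF cg, of v] by auto
    have "{w. E v w} \<noteq> {}" using deg3[OF md, of v] by (metis card.empty not_numeral_le_zero)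
    then obtain w where evw: "E v w" by blast
    have "w \<noteq> v" using evw sg unfolding simple_graph_def by auto
    hence "gdist E v w \<noteq> 0" using gd_zero[OF cg, of v w] by simp
    moreover have "gdist E v w \<le> gdist E v v + 1" using gd_adj(1)[OF sg cg evw, of v] .
    moreover have "gdist E v v = 0" using gd_zero[OF cg] by simp
    ultimately have "w \<in> dist_set E v 1" unfolding dist_set_def by simp
    hence "dist_set E v 1 \<noteq> {}" by blast
    hence "card (dist_set E v 1) \<ge> 1" by (simp add: card_gt_0_iff Suc_le_eq)
    thus ?thesis using True D0 by simp
  next
    case False
    hence i1: "1 \<le> i" by simp
    let ?A = "dist_set E v i" and ?B = "dist_set E v (i+1)"
    have "2 * card ?A = (\<Sum>u\<in>?A. 2)" by simp
    also have "\<dots> \<le> (\<Sum>u\<in>?A. card {w \<in> ?B. E u w})"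
      by (rule sum_mono) (rule succ2[OF sg cg q md pr ind i1 ie])
    also have "\<dots> = (\<Sum>u\<in>?A. \<Sum>w\<in>?B. if E u w then 1 else 0)"
      by (intro sum.cong refl card_filter_sum) simp
    also have "\<dots> = (\<Sum>w\<in>?B. \<Sum>u\<in>?A. if E u w then 1 else 0)"
      by (rule sum.swap)
    also have "\<dots> = (\<Sum>w\<in>?B. card {u \<in> ?A. E u w})"
      by (intro sum.cong refl card_filter_sum[symmetric]) simp
    also have "\<dots> = (\<Sum>w\<in>?B. 2)"
    proof (rule sum.cong[OF refl])
      fix w assume w: "w \<in> ?B"
      hence "{u \<in> ?A. E u w} = predecessors E v w"
        unfolding predecessors_def dist_set_def by simp
      moreover have "card (predecessors E v w) = 2"
        using pr[rule_format, of "i+1" w] ie i1 w by simp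
      ultimately show "card {u \<in> ?A. E u w} = 2" by simp
    qed
    also have "\<dots> = 2 * card ?B" by simp
    finally show ?thesis by simp
  qed
qed

end
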